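(* The maps $\alpha_*,\gamma_*,\alpha_{\le\omega},\gamma_{\le\omega}$ are monotone and form Galois connections: for all $U\subseteq\Sigma^*$, $\mathcal U\in\mathcal M_*$, $\alpha_*(U)\subseteq\mathcal U$ iff $U\subseteq\gamma_*(\mathcal U)$; and for all $V\subseteq\Sigma^{\le\omega}$, $\mathcal V\in\mathcal M_{\le\omega}$, $\alpha_{\le\omega}(V)\subseteq\mathcal V$ iff $V\subseteq\gamma_{\le\omega}(\mathcal V)$. Moreover $\alpha_*(\gamma_*(\mathcal U))=\mathcal U$ and $\alpha_{\le\omega}(\gamma_{\le\omega}(\mathcal V))=\mathcal V$ for all $\mathcal U\in\mathcal M_*$, $\mathcal V\in\mathcal M_{\le\omega}$. Furthermore, all four maps preserve unions and least and greatest elements, and $\gamma_*$ and $\gamma_{\le\omega}$ preserve intersections.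
   Context: $\Sigma$ is a finite alphabet, $\Sigma^{\le\omega}=\Sigma^*\cup\Sigma^\omega$; concatenation $w\cdot u$ equals $wu$ if $w$ is finite and $w$ if $w$ is infinite, extended pointwise to languages. For $A\subseteq\Sigma^*$, $A^\omega$ is the set of all words $w_0w_1w_2\cdots$ with $w_i\in A$, and $CD^\omega$ means $C\cdot D^\omega$. Fix an extended Büchi automaton $\mathfrak A=(Q,\Sigma,\delta,q_0,F)$ (finite states, $\delta:Q\times\Sigma\to\mathcal P(Q)$, initial $q_0$, final $F$). For $w\in\Sigma^*$ write $p\overset{w}{\leadsto}q$ if $q$ is reachable from $p$ reading $w$, and $p\overset{w}{\leadsto}_F q$ if there are $q''\in F$, $w=uv$ with $p\overset{u}{\leadsto}q''\overset{v}{\leadsto}q$. For $w,u\in\Sigma^+$, $w\sim u$ iff for all $p,q$: $p\overset{w}{\leadsto}q\Leftrightarrow p\overset{u}{\leadsto}q$ and $p\overset{w}{\leadsto}_Fq\Leftrightarrow p\overset{u}{\leadsto}_Fq$. $\mathcal Q=\Sigma^+/{\sim}\uplus\{[\epsilon]\}$ with $[\epsilon]=\{\epsilon\}$; concatenation of classes is well defined. Let $\mathcal C=\{(C,D)\mid C,D\in\mathcal Q,\ CD=C,\ DD=D\}$. Define $\mathfrak f(V)=\{(C,D)\in\mathcal C\mid CD^\omega\cap V\neq\emptyset\}$ for $V\subseteq\Sigma^{\le\omega}$ and $\mathfrak g(\mathcal V)=\bigcup_{(C,D)\in\mathcal V}CD^\omega$ for $\mathcal V\subseteq\mathcal C$.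 $\mathcal V$ is closed if $\mathfrak f(\mathfrak g(\mathcal V))=\mathcal V$; the closure is $\mathfrak c(\mathcal V)=\bigcup_{n\ge1}(\mathfrak f\circ\mathfrak g)^n(\mathcal V)$. $\mathcal M_{\le\omega}=\{\mathfrak c(\mathfrak f(V))\mid V\subseteq\Sigma^{\le\omega}\}$ and $\mathcal M_*=\mathcal P(\mathcal Q)$, both ordered by inclusion. Abstraction functions: $\alpha_*(U)=\{C\in\mathcal Q\mid C\cap U\neq\emptyset\}$ for $U\subseteq\Sigma^*$, and $\alpha_{\le\omega}(V)=\mathfrak c(\mathfrak f(V))$ for $V\subseteq\Sigma^{\le\omega}$. Concretization functions: $\gamma_*(\mathcal U)=\bigcup_{C\in\mathcal U}C$ and $\gamma_{\le\omega}(\mathcal V)=\mathfrak g(\mathcal V)$. *)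

theory Defs
  imports Main
begin

datatype 'a xword = Fin "'a list" | Inf "nat \<Rightarrow> 'a"

fun xconc :: "'a xword \<Rightarrow> 'a xword \<Rightarrow> 'a xword" where
  "xconc (Fin u) (Fin v) = Fin (u @ v)"
| "xconc (Fin u) (Inf w) = Inf (\<lambda>k. if k < length u then u ! k else w (k - length u))"
| "xconc (Inf w) _ = Inf w"

text \<open>x is the (possibly finite) concatenation w_0 w_1 w_2 ... of the sequence f.\<close>
definition omega_concat :: "(nat \<Rightarrow> 'a list) \<Rightarrow> 'a xword \<Rightarrow> bool" where
  "omega_concat f x \<longleftrightarrow> (case x of
      Fin u \<Rightarrow> (\<exists>n. (\<forall>i\<ge>n. f i = []) \<and> u = concat (map f [0..<n]))
    | Inf w \<Rightarrow> (\<forall>n. \<exists>i\<ge>n. f i \<noteq> []) \<and>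
               (\<forall>n k. k < length (concat (map f [0..<n])) \<longrightarrow> w k = concat (map f [0..<n]) ! k))"

definition omega_lang :: "'a list set \<Rightarrow> 'a xword set" where
  "omega_lang A = {x. \<exists>f. (\<forall>i. f i \<in> A) \<and> omega_concat f x}"

definition cd_omega :: "'a list set \<Rightarrow> 'a list set \<Rightarrow> 'a xword set" where
  "cd_omega C D = {xconc (Fin u) x | u x. u \<in> C \<and> x \<in> omega_lang D}"

text \<open>Automaton (Q, Sigma, delta, q0, F) with Q = the finite type 'q; q0 plays no role below.\<close>
fun reach :: "('q \<Rightarrow> 'a \<Rightarrow> 'q set) \<Rightarrow> 'q \<Rightarrow> 'a list \<Rightarrow> 'q \<Rightarrow> bool" where
  "reach \<delta> p [] q = (p = q)"
| "reach \<delta> p (a # w) q = (\<exists>q'\<in>\<delta> p a. reach \<delta> q' w q)"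

definition reachF :: "('q \<Rightarrow> 'a \<Rightarrow> 'q set) \<Rightarrow> 'q set \<Rightarrow> 'q \<Rightarrow> 'a list \<Rightarrow> 'q \<Rightarrow> bool" where
  "reachF \<delta> F p w q \<longleftrightarrow> (\<exists>q'' u v. q'' \<in> F \<and> w = u @ v \<and> reach \<delta> p u q'' \<and> reach \<delta> q'' v q)"

definition wequiv :: "('q \<Rightarrow> 'a \<Rightarrow> 'q set) \<Rightarrow> 'q set \<Rightarrow> 'a list \<Rightarrow> 'a list \<Rightarrow> bool" where
  "wequiv \<delta> F w u \<longleftrightarrow> w \<noteq> [] \<and> u \<noteq> [] \<and>
     (\<forall>p q. (reach \<delta> p w q \<longleftrightarrow> reach \<delta> p u q) \<and> (reachF \<delta> F p w q \<longleftrightarrow> reachF \<delta> F p u q))"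

definition cls :: "('q \<Rightarrow> 'a \<Rightarrow> 'q set) \<Rightarrow> 'q set \<Rightarrow> 'a list \<Rightarrow> 'a list set" where
  "cls \<delta> F w = (if w = [] then {[]} else {u. wequiv \<delta> F w u})"

definition Qcls :: "('q \<Rightarrow> 'a \<Rightarrow> 'q set) \<Rightarrow> 'q set \<Rightarrow> 'a list set set" where
  "Qcls \<delta> F = range (cls \<delta> F)"

definition cconc :: "('q \<Rightarrow> 'a \<Rightarrow> 'q set) \<Rightarrow> 'q set \<Rightarrow> 'a list set \<Rightarrow> 'a list set \<Rightarrow> 'a list set" where
  "cconc \<delta> F C D = cls \<delta> F ((SOME u. u \<in> C) @ (SOME v. v \<in> D))"

definition Cpairs :: "('q \<Rightarrow> 'a \<Rightarrow> 'q set) \<Rightarrow> 'q set \<Rightarrow> ('a list set \<times> 'a list set) set" where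
  "Cpairs \<delta> F = {(C, D). C \<in> Qcls \<delta> F \<and> D \<in> Qcls \<delta> F \<and> cconc \<delta> F C D = C \<and> cconc \<delta> F D D = D}"

definition fmap :: "('q \<Rightarrow> 'a \<Rightarrow> 'q set) \<Rightarrow> 'q set \<Rightarrow> 'a xword set \<Rightarrow> ('a list set \<times> 'a list set) set" where
  "fmap \<delta> F V = {(C, D) \<in> Cpairs \<delta> F. cd_omega C D \<inter> V \<noteq> {}}"

definition gmap :: "('a list set \<times> 'a list set) set \<Rightarrow> 'a xword set" where
  "gmap \<V> = (\<Union>(C, D)\<in>\<V>. cd_omega C D)"

definition closure_c :: "('q \<Rightarrow> 'a \<Rightarrow> 'q set) \<Rightarrow> 'q set \<Rightarrow> ('a list set \<times> 'a list set) set \<Rightarrow> ('a list set \<times> 'a list set) set" where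
  "closure_c \<delta> F \<V> = (\<Union>n\<in>{1..}. ((fmap \<delta> F \<circ> gmap) ^^ n) \<V>)"

definition M_omega :: "('q \<Rightarrow> 'a \<Rightarrow> 'q set) \<Rightarrow> 'q set \<Rightarrow> ('a list set \<times> 'a list set) set set" where
  "M_omega \<delta> F = {closure_c \<delta> F (fmap \<delta> F V) | V. True}"

definition M_star :: "('q \<Rightarrow> 'a \<Rightarrow> 'q set) \<Rightarrow> 'q set \<Rightarrow> 'a list set set set" where
  "M_star \<delta> F = Pow (Qcls \<delta> F)"

definition alpha_star :: "('q \<Rightarrow> 'a \<Rightarrow> 'q set) \<Rightarrow> 'q set \<Rightarrow> 'a list set \<Rightarrow> 'a list set set" where
  "alpha_star \<delta> F U = {C \<in> Qcls \<delta> F. C \<inter> U \<noteq> {}}"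

definition gamma_star :: "'a list set set \<Rightarrow> 'a list set" where
  "gamma_star \<U> = \<Union>\<U>"

definition alpha_omega :: "('q \<Rightarrow> 'a \<Rightarrow> 'q set) \<Rightarrow> 'q set \<Rightarrow> 'a xword set \<Rightarrow> ('a list set \<times> 'a list set) set" where
  "alpha_omega \<delta> F V = closure_c \<delta> F (fmap \<delta> F V)"

definition gamma_omega :: "('a list set \<times> 'a list set) set \<Rightarrow> 'a xword set" where
  "gamma_omega \<V> = gmap \<V>"

end

theory Submission
  imports Defs "HOL-Library.Ramsey"
begin

definition sig :: "('q \<Rightarrow> 'a \<Rightarrow> 'q set) \<Rightarrow> 'q set \<Rightarrow> 'a list \<Rightarrow> ('q\<Rightarrow>'q\<Rightarrow>bool) \<times> ('q\<Rightarrow>'q\<Rightarrow>bool)" where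
  "sig \<delta> F w = (\<lambda>p q. reach \<delta> p w q, \<lambda>p q. reachF \<delta> F p w q)"

definition key :: "('q \<Rightarrow> 'a \<Rightarrow> 'q set) \<Rightarrow> 'q set \<Rightarrow> 'a list \<Rightarrow> (('q\<Rightarrow>'q\<Rightarrow>bool) \<times> ('q\<Rightarrow>'q\<Rightarrow>bool)) option" where
  "key \<delta> F w = (if w = [] then None else Some (sig \<delta> F w))"

lemma reach_append: "reach \<delta> p (u@v) q \<longleftrightarrow> (\<exists>r. reach \<delta> p u r \<and> reach \<delta> r v q)"
  by (induction u arbitrary: p) auto

lemma reachF_append: "reachF \<delta> F p (u@v) q \<longleftrightarrow>
   (\<exists>r. reachF \<delta> F p u r \<and> reach \<delta> r v q) \<or> (\<exists>r. reach \<delta> p u r \<and> reachF \<delta> F r v q)"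
proof
  assume "reachF \<delta> F p (u@v) q"
  then obtain q'' u' v' where h: "q''\<in>F" "u@v = u'@v'" "reach \<delta> p u' q''" "reach \<delta> q'' v' q"
    unfolding reachF_def by blast
  from h(2) obtain us where "(u = u'@us \<and> us@v = v') \<or> (u@us = u' \<and> v = us@v')"
    by (auto simp: append_eq_append_conv2)
  then show "(\<exists>r. reachF \<delta> F p u r \<and> reach \<delta> r v q) \<or> (\<exists>r. reach \<delta> p u r \<and> reachF \<delta> F r v q)"
  proof
    assume a: "u = u'@us \<and> us@v = v'"
    then obtain r where "reach \<delta> q'' us r" "reach \<delta> r v q" using h(4) reach_append by metis
    then have "reachF \<delta> F p u r" using a h unfolding reachF_def by blast
    then show ?thesis using \<open>reach \<delta> r v q\<close> by blast
  next
    assume a: "u@us = u' \<and> v = us@v'"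
    then obtain r where "reach \<delta> p u r" "reach \<delta> r us q''" using h(3) reach_append by metis
    then have "reachF \<delta> F r v q" using a h unfolding reachF_def by blast
    then show ?thesis using \<open>reach \<delta> p u r\<close> by blast
  qed
next
  assume "(\<exists>r. reachF \<delta> F p u r \<and> reach \<delta> r v q) \<or> (\<exists>r. reach \<delta> p u r \<and> reachF \<delta> F r v q)"
  then show "reachF \<delta> F p (u@v) q"
  proof
    assume "\<exists>r. reachF \<delta> F p u r \<and> reach \<delta> r v q"
    then obtain r q'' u1 u2 where "q''\<in>F" "u = u1@u2" "reach \<delta> p u1 q''" "reach \<delta> q'' u2 r" "reach \<delta> r v q"
      unfolding reachF_def by blast
    moreover have "reach \<delta> q'' (u2@v) q" using calculation reach_append by metis
    ultimately show ?thesis unfolding reachF_def by auto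
  next
    assume "\<exists>r. reach \<delta> p u r \<and> reachF \<delta> F r v q"
    then obtain r q'' v1 v2 where "q''\<in>F" "v = v1@v2" "reach \<delta> p u r" "reach \<delta> r v1 q''" "reach \<delta> q'' v2 q"
      unfolding reachF_def by blast
    moreover have "reach \<delta> p (u@v1) q''" using calculation reach_append by metis
    moreover have "u@v = (u@v1)@v2" using calculation by simp
    ultimately show ?thesis unfolding reachF_def by blast
  qed
qed

lemma sig_append_cong: "sig \<delta> F u = sig \<delta> F u' \<Longrightarrow> sig \<delta> F v = sig \<delta> F v' \<Longrightarrow> sig \<delta> F (u@v) = sig \<delta> F (u'@v')"
  unfolding sig_def by (simp add: fun_eq_iff reach_append reachF_append)

lemma key_append_cong: "key \<delta> F u = key \<delta> F u' \<Longrightarrow> key \<delta> F v = key \<delta> F v' \<Longrightarrow> key \<delta> F (u@v) = key \<delta> F (u'@v')"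
  unfolding key_def by (auto split: if_splits intro: sig_append_cong)

lemma cls_key: "cls \<delta> F w = {u. key \<delta> F u = key \<delta> F w}"
  unfolding cls_def wequiv_def key_def sig_def by (auto simp: fun_eq_iff)

lemma in_cls_iff: "u \<in> cls \<delta> F w \<longleftrightarrow> key \<delta> F u = key \<delta> F w"
  by (simp add: cls_key)

lemma cls_eq_iff: "cls \<delta> F w = cls \<delta> F w' \<longleftrightarrow> key \<delta> F w = key \<delta> F w'"
  by (auto simp: cls_key)

lemma cls_self: "w \<in> cls \<delta> F w" by (simp add: in_cls_iff)

lemma Qcls_disj: "C \<in> Qcls \<delta> F \<Longrightarrow> C' \<in> Qcls \<delta> F \<Longrightarrow> x \<in> C \<Longrightarrow> x \<in> C' \<Longrightarrow> C = C'"
  unfolding Qcls_def by (auto simp: cls_eq_iff in_cls_iff)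

lemma Qcls_ne: "C \<in> Qcls \<delta> F \<Longrightarrow> C \<noteq> {}"
  unfolding Qcls_def using cls_self by blast

lemma Qcls_cover: "\<exists>C\<in>Qcls \<delta> F. x \<in> C"
  unfolding Qcls_def using cls_self by blast

lemma cconc_cls: "cconc \<delta> F (cls \<delta> F a) (cls \<delta> F b) = cls \<delta> F (a@b)"
proof -
  have "(SOME x. x \<in> cls \<delta> F a) \<in> cls \<delta> F a" "(SOME x. x \<in> cls \<delta> F b) \<in> cls \<delta> F b"
    using cls_self by (metis someI)+
  then have "key \<delta> F ((SOME x. x \<in> cls \<delta> F a) @ (SOME x. x \<in> cls \<delta> F b)) = key \<delta> F (a @ b)"
    unfolding in_cls_iff by (rule key_append_cong)
  then show ?thesis unfolding cconc_def cls_eq_iff .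
qed

lemma cls_Nil: "cls \<delta> F [] = {[]}" by (simp add: cls_def)

lemma cm_split: "m \<le> n \<Longrightarrow> concat (map f [0..<n]) = concat (map f [0..<m]) @ concat (map f [m..<n])"
proof -
  assume "m \<le> n"
  then obtain d where "n = m + d" using le_Suc_ex by blast
  then show ?thesis using upt_add_eq_append[of 0 m d] by simp
qed

lemma cm_len: "(\<forall>i. f i \<noteq> []) \<Longrightarrow> n \<le> length (concat (map f [0..<n]))"
proof (induction n)
  case 0 then show ?case by simp
next
  case (Suc n)
  then have "f n \<noteq> []" by blast
  then have "length (f n) \<ge> 1" by (cases "f n") auto
  with Suc show ?case by simp
qed

lemma omega_concat_Inf:
  assumes ne: "\<forall>i. f i \<noteq> []"
  shows "omega_concat f (Inf (\<lambda>k. concat (map f [0..<Suc k]) ! k))"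
  unfolding omega_concat_def xword.case
proof (intro conjI allI impI)
  fix n show "\<exists>i\<ge>n. f i \<noteq> []" using ne by blast
next
  fix n k assume k: "k < length (concat (map f [0..<n]))"
  have L: "Suc k \<le> length (concat (map f [0..<Suc k]))" using cm_len[OF ne] .
  show "concat (map f [0..<Suc k]) ! k = concat (map f [0..<n]) ! k"
  proof (cases "Suc k \<le> n")
    case True
    then show ?thesis using cm_split[OF True, of f] L by (simp add: nth_append del: upt_Suc)
  next
    case False
    then have "n \<le> Suc k" by simp
    then show ?thesis using cm_split[OF \<open>n \<le> Suc k\<close>, of f] k by (simp add: nth_append del: upt_Suc)
  qed
qed

lemma omega_lang_Nil: "Fin [] \<in> omega_lang {[]}"
  unfolding omega_lang_def omega_concat_def
  by (rule CollectI, rule exI[of _ "\<lambda>_. []"]) auto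

lemma omega_lang_ne: "D \<in> Qcls \<delta> F \<Longrightarrow> omega_lang D \<noteq> {}"
proof -
  assume "D \<in> Qcls \<delta> F"
  then obtain w where D: "D = cls \<delta> F w" unfolding Qcls_def by blast
  show ?thesis
  proof (cases "w = []")
    case True then show ?thesis using D cls_Nil omega_lang_Nil by fastforce
  next
    case False
    let ?f = "\<lambda>_::nat. w"
    have "omega_concat ?f (Inf (\<lambda>k. concat (map ?f [0..<Suc k]) ! k))"
      by (rule omega_concat_Inf) (simp add: False)
    moreover have "\<forall>i. ?f i \<in> D" using D cls_self by blast
    ultimately have "Inf (\<lambda>k. concat (map ?f [0..<Suc k]) ! k) \<in> omega_lang D"
      unfolding omega_lang_def by (intro CollectI exI[of _ ?f]) simp
    then show ?thesis by blast
  qed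
qed

lemma cd_omega_ne: "C \<in> Qcls \<delta> F \<Longrightarrow> D \<in> Qcls \<delta> F \<Longrightarrow> cd_omega C D \<noteq> {}"
  using Qcls_ne[of C \<delta> F] omega_lang_ne[of D \<delta> F] unfolding cd_omega_def by blast

lemma Cpairs_ne: "(C,D) \<in> Cpairs \<delta> F \<Longrightarrow> cd_omega C D \<noteq> {}"
  unfolding Cpairs_def using cd_omega_ne by blast

definition seg :: "(nat \<Rightarrow> 'a) \<Rightarrow> nat \<Rightarrow> nat \<Rightarrow> 'a list" where
  "seg w i j = map w [i..<j]"

lemma seg_append: "i \<le> j \<Longrightarrow> j \<le> k \<Longrightarrow> seg w i j @ seg w j k = seg w i k"
proof -
  assume "i \<le> j" "j \<le> k"
  then obtain d where "k = j + d" using le_Suc_ex by blast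
  then show ?thesis unfolding seg_def using \<open>i \<le> j\<close> \<open>j \<le> k\<close>
    by (metis map_append upt_add_eq_append le_trans)
qed

lemma seg_ne: "i < j \<Longrightarrow> seg w i j \<noteq> []" by (simp add: seg_def)

lemma strict_mono_add: "strict_mono (e::nat\<Rightarrow>nat) \<Longrightarrow> e i + m \<le> e (i + m)"
proof (induction m)
  case 0 then show ?case by simp
next
  case (Suc m)
  then have "e (i+m) < e (i + Suc m)" by (simp add: strict_mono_def)
  with Suc show ?case by simp
qed

lemma cover_Fin: "\<exists>(C,D)\<in>Cpairs \<delta> F. Fin u \<in> cd_omega C D"
proof -
  have "(cls \<delta> F u, cls \<delta> F []) \<in> Cpairs \<delta> F"
    unfolding Cpairs_def Qcls_def by (simp add: cconc_cls)
  moreover have "Fin u \<in> cd_omega (cls \<delta> F u) (cls \<delta> F [])"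
    unfolding cd_omega_def cls_Nil using omega_lang_Nil cls_self
    by (metis (mono_tags, lifting) CollectI append_Nil2 xconc.simps(1))
  ultimately show ?thesis by blast
qed

lemma cover_Inf:
  fixes \<delta> :: "'q::finite \<Rightarrow> 'a \<Rightarrow> 'q set"
  shows "\<exists>(C,D)\<in>Cpairs \<delta> F. Inf w \<in> cd_omega C D"
proof -
  let ?S = "UNIV :: (('q\<Rightarrow>'q\<Rightarrow>bool) \<times> ('q\<Rightarrow>'q\<Rightarrow>bool)) set"
  obtain g where g: "bij_betw g ?S {0..<card ?S}" using ex_bij_betw_finite_nat[of ?S] by auto
  define col where "col X = g (sig \<delta> F (seg w (Min X) (Max X)))" for X :: "nat set"
  have "\<forall>x\<in>(UNIV::nat set). \<forall>y\<in>UNIV. x \<noteq> y \<longrightarrow> col {x, y} < card ?S"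
    unfolding col_def using g by (auto simp: bij_betw_def)
  from Ramsey2[OF infinite_UNIV_nat this] obtain Y t where
    Y: "infinite Y" "\<forall>x\<in>Y. \<forall>y\<in>Y. x \<noteq> y \<longrightarrow> col {x, y} = t" by blast
  define e where "e = enumerate Y"
  have sm: "strict_mono e" unfolding e_def using Y(1) by (simp add: strict_mono_def enumerate_mono)
  have col_e: "g (sig \<delta> F (seg w (e i) (e j))) = t" if "i < j" for i j
  proof -
    have "e i < e j" using sm that by (simp add: strict_mono_def)
    moreover have "e i \<in> Y" "e j \<in> Y" unfolding e_def using Y(1) by (auto intro: enumerate_in_set)
    ultimately have "col {e i, e j} = t" using Y(2) by auto
    then show ?thesis using \<open>e i < e j\<close> unfolding col_def by (simp add: max_def min_def)
  qed
  have ginj: "inj g" using g by (simp add: bij_betw_def)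
  have keq: "key \<delta> F (seg w (e i) (e j)) = key \<delta> F (seg w (e 0) (e 1))" if "i < j" for i j
  proof -
    have "sig \<delta> F (seg w (e i) (e j)) = sig \<delta> F (seg w (e 0) (e 1))"
      using col_e[OF that] col_e[of 0 1] ginj by (auto dest: injD)
    moreover have "e i < e j" "e 0 < e 1" using sm that by (auto simp: strict_mono_def)
    ultimately show ?thesis unfolding key_def using seg_ne by auto
  qed
  have mono_le: "e i \<le> e j" if "i \<le> j" for i j using sm that by (simp add: strict_mono_less_eq)
  define D where "D = cls \<delta> F (seg w (e 0) (e 1))"
  define u where "u = seg w 0 (e 1)"
  define C where "C = cls \<delta> F u"
  have s12: "seg w (e 0) (e 1) @ seg w (e 1) (e 2) = seg w (e 0) (e 2)"
    by (intro seg_append mono_le) simp_all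
  have DD: "cconc \<delta> F D D = D"
  proof -
    have "cconc \<delta> F D D = cls \<delta> F (seg w (e 0) (e 1) @ seg w (e 0) (e 1))"
      unfolding D_def by (rule cconc_cls)
    also have "\<dots> = cls \<delta> F (seg w (e 0) (e 1) @ seg w (e 1) (e 2))"
      unfolding cls_eq_iff by (rule key_append_cong) (use keq[of 1 2] in simp_all)
    also have "\<dots> = cls \<delta> F (seg w (e 0) (e 2))" by (simp only: s12)
    also have "\<dots> = D" unfolding D_def cls_eq_iff using keq[of 0 2] by simp
    finally show ?thesis .
  qed
  have u_split: "u = seg w 0 (e 0) @ seg w (e 0) (e 1)"
    using seg_append[of 0 "e 0" "e 1" w] mono_le[of 0 1] unfolding u_def by simp
  have CD: "cconc \<delta> F C D = C"
  proof -
    have "cconc \<delta> F C D = cls \<delta> F (u @ seg w (e 0) (e 1))"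
      unfolding D_def C_def by (rule cconc_cls)
    also have "\<dots> = cls \<delta> F (u @ seg w (e 1) (e 2))"
      unfolding cls_eq_iff by (rule key_append_cong) (use keq[of 1 2] in simp_all)
    also have "u @ seg w (e 1) (e 2) = seg w 0 (e 0) @ seg w (e 0) (e 2)"
      by (simp only: u_split append_assoc s12)
    also have "cls \<delta> F (seg w 0 (e 0) @ seg w (e 0) (e 2)) = cls \<delta> F (seg w 0 (e 0) @ seg w (e 0) (e 1))"
      unfolding cls_eq_iff by (rule key_append_cong) (use keq[of 0 2] in simp_all)
    also have "seg w 0 (e 0) @ seg w (e 0) (e 1) = u" by (rule u_split[symmetric])
    finally show ?thesis unfolding C_def .
  qed
  have "C \<in> Qcls \<delta> F" "D \<in> Qcls \<delta> F" unfolding Qcls_def C_def D_def by auto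
  then have CDin: "(C, D) \<in> Cpairs \<delta> F" using DD CD unfolding Cpairs_def by simp
  define h where "h k = seg w (e (Suc k)) (e (Suc (Suc k)))" for k
  have hD: "h k \<in> D" for k unfolding h_def D_def in_cls_iff by (rule keq) simp
  have hne: "\<forall>k. h k \<noteq> []" unfolding h_def
    by (intro allI seg_ne) (use sm in \<open>simp add: strict_mono_less\<close>)
  have hcat: "concat (map h [0..<n]) = seg w (e 1) (e (Suc n))" for n
  proof (induction n)
    case 0 then show ?case by (simp add: seg_def)
  next
    case (Suc n)
    have "seg w (e 1) (e (Suc n)) @ seg w (e (Suc n)) (e (Suc (Suc n))) = seg w (e 1) (e (Suc (Suc n)))"
      by (intro seg_append mono_le) simp_all
    then show ?case using Suc.IH by (simp add: h_def)
  qed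
  define w' where "w' = (\<lambda>k. concat (map h [0..<Suc k]) ! k)"
  have "Inf w' \<in> omega_lang D" unfolding omega_lang_def w'_def
    using omega_concat_Inf[OF hne] hD by blast
  moreover have "Inf w = xconc (Fin u) (Inf w')"
  proof -
    have lu: "length u = e 1" unfolding u_def seg_def by simp
    have "w k = (if k < length u then u ! k else w' (k - length u))" for k
    proof (cases "k < e 1")
      case True then show ?thesis unfolding lu u_def seg_def by simp
    next
      case False
      define j where "j = k - e 1"
      have "e 1 + Suc j \<le> e (1 + Suc j)" using strict_mono_add[OF sm] .
      then have lt: "j < e (Suc (Suc j)) - e 1" by simp
      have "w' j = w (e 1 + j)" unfolding w'_def hcat seg_def using lt by simp
      then show ?thesis using False lu j_def by simp
    qed
    then show ?thesis by (simp add: fun_eq_iff)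
  qed
  moreover have "u \<in> C" unfolding C_def by (rule cls_self)
  ultimately have "Inf w \<in> cd_omega C D" unfolding cd_omega_def by blast
  with CDin show ?thesis by blast
qed

lemma cover:
  fixes \<delta> :: "'q::finite \<Rightarrow> 'a \<Rightarrow> 'q set"
  shows "\<exists>(C,D)\<in>Cpairs \<delta> F. x \<in> cd_omega C D"
proof (cases x)
  case (Fin u) show ?thesis unfolding Fin by (rule cover_Fin)
next
  case (Inf w) show ?thesis unfolding Inf by (rule cover_Inf)
qed


lemma mem_gmap: "x \<in> gmap V \<longleftrightarrow> (\<exists>(C,D)\<in>V. x \<in> cd_omega C D)"
  unfolding gmap_def by auto

lemma gmap_mono: "A \<subseteq> B \<Longrightarrow> gmap A \<subseteq> gmap B"
  unfolding gmap_def by auto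

lemma gmap_Un: "gmap (A \<union> B) = gmap A \<union> gmap B"
  unfolding gmap_def by auto

lemma gmap_UN: "gmap (\<Union>n. A n) = (\<Union>n. gmap (A n))"
  unfolding gmap_def by auto

lemma gmap_empty: "gmap {} = {}"
  unfolding gmap_def by auto

lemma fmap_mono: "A \<subseteq> B \<Longrightarrow> fmap \<delta> F A \<subseteq> fmap \<delta> F B"
  unfolding fmap_def by auto

lemma fmap_Un: "fmap \<delta> F (A \<union> B) = fmap \<delta> F A \<union> fmap \<delta> F B"
  unfolding fmap_def by auto

lemma fmap_UN: "fmap \<delta> F (\<Union>n. A n) = (\<Union>n. fmap \<delta> F (A n))"
  unfolding fmap_def by auto

lemma fmap_empty: "fmap \<delta> F {} = {}"
  unfolding fmap_def by auto

lemma fmap_sub: "fmap \<delta> F A \<subseteq> Cpairs \<delta> F"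
  unfolding fmap_def by auto

lemma mem_fmap: "p \<in> fmap \<delta> F V \<longleftrightarrow> p \<in> Cpairs \<delta> F \<and> cd_omega (fst p) (snd p) \<inter> V \<noteq> {}"
  unfolding fmap_def by (cases p) auto

lemma H_ext: "A \<subseteq> Cpairs \<delta> F \<Longrightarrow> A \<subseteq> fmap \<delta> F (gmap A)"
proof
  fix p assume A: "A \<subseteq> Cpairs \<delta> F" and p: "p \<in> A"
  obtain C D where pCD: "p = (C,D)" by (cases p)
  have "cd_omega C D \<noteq> {}" using Cpairs_ne A p pCD by blast
  moreover have "cd_omega C D \<subseteq> gmap A" using p pCD unfolding gmap_def by auto
  ultimately show "p \<in> fmap \<delta> F (gmap A)" using A p pCD unfolding mem_fmap by auto
qed

abbreviation G where "G \<delta> F \<equiv> fmap \<delta> F \<circ> gmap"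

lemma it_mono: "X \<subseteq> Y \<Longrightarrow> (G \<delta> F ^^ n) X \<subseteq> (G \<delta> F ^^ n) Y"
  by (induction n) (auto intro!: fmap_mono gmap_mono)

lemma it_Un: "(G \<delta> F ^^ n) (X \<union> Y) = (G \<delta> F ^^ n) X \<union> (G \<delta> F ^^ n) Y"
  by (induction n) (auto simp: fmap_Un gmap_Un)

lemma it_empty: "(G \<delta> F ^^ n) {} = {}"
  by (induction n) (auto simp: fmap_empty gmap_empty)

lemma it_sub: "(G \<delta> F ^^ Suc n) X \<subseteq> Cpairs \<delta> F"
  using fmap_sub by simp

lemma it_inc: "(G \<delta> F ^^ Suc n) X \<subseteq> (G \<delta> F ^^ Suc (Suc n)) X"
proof -
  have "(G \<delta> F ^^ Suc n) X \<subseteq> G \<delta> F ((G \<delta> F ^^ Suc n) X)"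
    using H_ext[OF it_sub] by simp
  then show ?thesis by simp
qed

lemma closure_alt: "closure_c \<delta> F X = (\<Union>n. (G \<delta> F ^^ Suc n) X)"
proof -
  have "{1..} = range Suc"
    by (auto simp: image_iff) (metis Suc_pred' less_eq_Suc_le One_nat_def)
  then show ?thesis unfolding closure_c_def by (simp add: image_image)
qed

lemma closure_closed: "fmap \<delta> F (gmap (closure_c \<delta> F X)) = closure_c \<delta> F X"
proof -
  have "fmap \<delta> F (gmap (closure_c \<delta> F X)) = (\<Union>n. (G \<delta> F ^^ Suc (Suc n)) X)"
    unfolding closure_alt gmap_UN fmap_UN by simp
  also have "\<dots> = (\<Union>n. (G \<delta> F ^^ Suc n) X)"
  proof
    show "(\<Union>n. (G \<delta> F ^^ Suc (Suc n)) X) \<subseteq> (\<Union>n. (G \<delta> F ^^ Suc n) X)" by blast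
    show "(\<Union>n. (G \<delta> F ^^ Suc n) X) \<subseteq> (\<Union>n. (G \<delta> F ^^ Suc (Suc n)) X)"
      using it_inc by blast
  qed
  finally show ?thesis unfolding closure_alt .
qed

lemma closure_of_closed: "fmap \<delta> F (gmap V) = V \<Longrightarrow> closure_c \<delta> F V = V"
proof -
  assume c: "fmap \<delta> F (gmap V) = V"
  have "(G \<delta> F ^^ n) V = V" for n by (induction n) (simp_all add: c)
  then show ?thesis unfolding closure_alt using c by simp
qed

lemma closure_mono: assumes "X \<subseteq> Y" shows "closure_c \<delta> F X \<subseteq> closure_c \<delta> F Y"
  unfolding closure_alt by (rule UN_mono[OF order_refl it_mono[OF assms]])

lemma closure_Un: "closure_c \<delta> F (X \<union> Y) = closure_c \<delta> F X \<union> closure_c \<delta> F Y"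
  unfolding closure_alt it_Un by blast

lemma closure_empty: "closure_c \<delta> F {} = {}"
  unfolding closure_alt it_empty by simp

lemma fmap_sub_closure: "fmap \<delta> F V \<subseteq> closure_c \<delta> F (fmap \<delta> F V)"
proof -
  have "fmap \<delta> F V \<subseteq> (G \<delta> F ^^ Suc 0) (fmap \<delta> F V)"
    using H_ext[OF fmap_sub] by simp
  then show ?thesis unfolding closure_alt by blast
qed

lemma M_omega_closed: "\<V> \<in> M_omega \<delta> F \<Longrightarrow> fmap \<delta> F (gmap \<V>) = \<V>"
  unfolding M_omega_def using closure_closed by blast

lemma closed_cover: "fmap \<delta> F (gmap \<V>) = \<V> \<Longrightarrow> (C,D) \<in> Cpairs \<delta> F \<Longrightarrow> x \<in> cd_omega C D \<Longrightarrow> x \<in> gmap \<V>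
   \<Longrightarrow> (C,D) \<in> \<V>"
proof -
  assume c: "fmap \<delta> F (gmap \<V>) = \<V>" and "(C,D) \<in> Cpairs \<delta> F" "x \<in> cd_omega C D" "x \<in> gmap \<V>"
  then have "(C,D) \<in> fmap \<delta> F (gmap \<V>)" unfolding mem_fmap by auto
  then show ?thesis using c by simp
qed


lemma star_galois: "\<U> \<in> M_star \<delta> F \<Longrightarrow> alpha_star \<delta> F U \<subseteq> \<U> \<longleftrightarrow> U \<subseteq> gamma_star \<U>"
proof
  assume M: "\<U> \<in> M_star \<delta> F" and a: "alpha_star \<delta> F U \<subseteq> \<U>"
  show "U \<subseteq> gamma_star \<U>"
  proof
    fix x assume "x \<in> U"
    obtain C where "C \<in> Qcls \<delta> F" "x \<in> C" using Qcls_cover by blast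
    then have "C \<in> \<U>" using a \<open>x \<in> U\<close> unfolding alpha_star_def by blast
    then show "x \<in> gamma_star \<U>" using \<open>x \<in> C\<close> unfolding gamma_star_def by blast
  qed
next
  assume M: "\<U> \<in> M_star \<delta> F" and a: "U \<subseteq> gamma_star \<U>"
  show "alpha_star \<delta> F U \<subseteq> \<U>"
  proof
    fix C assume "C \<in> alpha_star \<delta> F U"
    then obtain x where C: "C \<in> Qcls \<delta> F" "x \<in> C" "x \<in> U" unfolding alpha_star_def by blast
    then obtain C' where "C' \<in> \<U>" "x \<in> C'" using a unfolding gamma_star_def by blast
    moreover have "C' \<in> Qcls \<delta> F" using M \<open>C' \<in> \<U>\<close> unfolding M_star_def by blast
    ultimately have "C = C'" using Qcls_disj C by blast
    then show "C \<in> \<U>" using \<open>C' \<in> \<U>\<close> by simp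
  qed
qed

lemma star_ag: "\<U> \<in> M_star \<delta> F \<Longrightarrow> alpha_star \<delta> F (gamma_star \<U>) = \<U>"
proof
  assume M: "\<U> \<in> M_star \<delta> F"
  then show "alpha_star \<delta> F (gamma_star \<U>) \<subseteq> \<U>" using star_galois by blast
  show "\<U> \<subseteq> alpha_star \<delta> F (gamma_star \<U>)"
  proof
    fix C assume "C \<in> \<U>"
    then have "C \<in> Qcls \<delta> F" using M unfolding M_star_def by blast
    then obtain x where "x \<in> C" using Qcls_ne by blast
    then show "C \<in> alpha_star \<delta> F (gamma_star \<U>)"
      using \<open>C \<in> Qcls \<delta> F\<close> \<open>C \<in> \<U>\<close> unfolding alpha_star_def gamma_star_def by blast
  qed
qed

lemma star_inter: "\<U>1 \<in> M_star \<delta> F \<Longrightarrow> \<U>2 \<in> M_star \<delta> F \<Longrightarrow>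
  gamma_star (\<U>1 \<inter> \<U>2) = gamma_star \<U>1 \<inter> gamma_star \<U>2"
  unfolding gamma_star_def M_star_def using Qcls_disj by blast

lemma star_top: "\<U> \<in> M_star \<delta> F \<Longrightarrow> (\<forall>\<W>\<in>M_star \<delta> F. \<W> \<subseteq> \<U>) \<Longrightarrow> gamma_star \<U> = UNIV"
proof -
  assume "\<forall>\<W>\<in>M_star \<delta> F. \<W> \<subseteq> \<U>"
  then have "Qcls \<delta> F \<subseteq> \<U>" unfolding M_star_def by blast
  then show ?thesis unfolding gamma_star_def using Qcls_cover by blast
qed

lemma om_galois:
  fixes \<delta> :: "'q::finite \<Rightarrow> 'a \<Rightarrow> 'q set"
  assumes M: "\<V> \<in> M_omega \<delta> F"
  shows "alpha_omega \<delta> F V \<subseteq> \<V> \<longleftrightarrow> V \<subseteq> gamma_omega \<V>"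
proof
  have c: "fmap \<delta> F (gmap \<V>) = \<V>" using M_omega_closed[OF M] .
  assume a: "alpha_omega \<delta> F V \<subseteq> \<V>"
  show "V \<subseteq> gamma_omega \<V>"
  proof
    fix x assume "x \<in> V"
    obtain C D where CD: "(C,D) \<in> Cpairs \<delta> F" "x \<in> cd_omega C D" using cover[of \<delta> F x] by blast
    then have "(C,D) \<in> fmap \<delta> F V" using \<open>x \<in> V\<close> unfolding mem_fmap by auto
    then have "(C,D) \<in> \<V>" using a fmap_sub_closure unfolding alpha_omega_def by blast
    then show "x \<in> gamma_omega \<V>" using CD unfolding gamma_omega_def mem_gmap by blast
  qed
next
  have c: "fmap \<delta> F (gmap \<V>) = \<V>" using M_omega_closed[OF M] .
  assume "V \<subseteq> gamma_omega \<V>"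
  then have "fmap \<delta> F V \<subseteq> \<V>" using fmap_mono c unfolding gamma_omega_def by metis
  then have "closure_c \<delta> F (fmap \<delta> F V) \<subseteq> closure_c \<delta> F \<V>" by (rule closure_mono)
  then show "alpha_omega \<delta> F V \<subseteq> \<V>" unfolding alpha_omega_def using closure_of_closed[OF c] by simp
qed

lemma om_ag: "\<V> \<in> M_omega \<delta> F \<Longrightarrow> alpha_omega \<delta> F (gamma_omega \<V>) = \<V>"
proof -
  assume M: "\<V> \<in> M_omega \<delta> F"
  have c: "fmap \<delta> F (gmap \<V>) = \<V>" using M_omega_closed[OF M] .
  show ?thesis unfolding alpha_omega_def gamma_omega_def c using closure_of_closed[OF c] .
qed

lemma om_empty_in: "{} \<in> M_omega \<delta> F"
proof -
  have "{} = closure_c \<delta> F (fmap \<delta> F {})" by (simp add: fmap_empty closure_empty)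
  then show ?thesis unfolding M_omega_def by blast
qed

lemma om_univ_in: "alpha_omega \<delta> F UNIV \<in> M_omega \<delta> F"
  unfolding M_omega_def alpha_omega_def by blast

lemma om_top:
  fixes \<delta> :: "'q::finite \<Rightarrow> 'a \<Rightarrow> 'q set"
  shows "\<V> \<in> M_omega \<delta> F \<Longrightarrow> (\<forall>\<W>\<in>M_omega \<delta> F. \<W> \<subseteq> \<V>) \<Longrightarrow> gamma_omega \<V> = UNIV"
proof -
  assume "\<forall>\<W>\<in>M_omega \<delta> F. \<W> \<subseteq> \<V>"
  then have a: "alpha_omega \<delta> F UNIV \<subseteq> \<V>" using om_univ_in by blast
  have "Cpairs \<delta> F \<subseteq> fmap \<delta> F UNIV"
  proof
    fix p assume p: "p \<in> Cpairs \<delta> F"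
    then have "cd_omega (fst p) (snd p) \<noteq> {}" using Cpairs_ne[of "fst p" "snd p"] by simp
    then show "p \<in> fmap \<delta> F UNIV" unfolding mem_fmap using p by simp
  qed
  then have sub: "Cpairs \<delta> F \<subseteq> \<V>" using a fmap_sub_closure unfolding alpha_omega_def by blast
  show ?thesis
  proof (rule set_eqI)
    fix x
    obtain C D where "(C,D) \<in> Cpairs \<delta> F" "x \<in> cd_omega C D" using cover[of \<delta> F x] by blast
    then show "x \<in> gamma_omega \<V> \<longleftrightarrow> x \<in> UNIV" using sub unfolding gamma_omega_def mem_gmap by blast
  qed
qed

lemma om_inter:
  fixes \<delta> :: "'q::finite \<Rightarrow> 'a \<Rightarrow> 'q set"
  assumes M1: "\<V>1 \<in> M_omega \<delta> F" and M2: "\<V>2 \<in> M_omega \<delta> F"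
  shows "gamma_omega (\<V>1 \<inter> \<V>2) = gamma_omega \<V>1 \<inter> gamma_omega \<V>2"
proof
  show "gamma_omega (\<V>1 \<inter> \<V>2) \<subseteq> gamma_omega \<V>1 \<inter> gamma_omega \<V>2"
    unfolding gamma_omega_def using gmap_mono by blast
  show "gamma_omega \<V>1 \<inter> gamma_omega \<V>2 \<subseteq> gamma_omega (\<V>1 \<inter> \<V>2)"
  proof
    fix x assume x: "x \<in> gamma_omega \<V>1 \<inter> gamma_omega \<V>2"
    obtain C D where CD: "(C,D) \<in> Cpairs \<delta> F" "x \<in> cd_omega C D" using cover[of \<delta> F x] by blast
    have "(C,D) \<in> \<V>1" using closed_cover[OF M_omega_closed[OF M1] CD] x unfolding gamma_omega_def by blast
    moreover have "(C,D) \<in> \<V>2" using closed_cover[OF M_omega_closed[OF M2] CD] x unfolding gamma_omega_def by blast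
    ultimately show "x \<in> gamma_omega (\<V>1 \<inter> \<V>2)" using CD unfolding gamma_omega_def mem_gmap by blast
  qed
qed

theorem lemma8:
  fixes \<delta> :: "'q::finite \<Rightarrow> 'a::finite \<Rightarrow> 'q set" and q0 :: 'q and F :: "'q set"
  shows
    \<comment> \<open>the maps go between the stated domains and are monotone\<close>
    "(\<forall>U. alpha_star \<delta> F U \<in> M_star \<delta> F) \<and> (\<forall>V. alpha_omega \<delta> F V \<in> M_omega \<delta> F) \<and>
     mono (alpha_star \<delta> F) \<and> mono_on (M_star \<delta> F) gamma_star \<and>
     mono (alpha_omega \<delta> F) \<and> mono_on (M_omega \<delta> F) gamma_omega \<and>
     \<comment> \<open>Galois connections\<close>
     (\<forall>U. \<forall>\<U>\<in>M_star \<delta> F. alpha_star \<delta> F U \<subseteq> \<U> \<longleftrightarrow> U \<subseteq> gamma_star \<U>) \<and>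
     (\<forall>V. \<forall>\<V>\<in>M_omega \<delta> F. alpha_omega \<delta> F V \<subseteq> \<V> \<longleftrightarrow> V \<subseteq> gamma_omega \<V>) \<and>
     \<comment> \<open>alpha after gamma is the identity\<close>
     (\<forall>\<U>\<in>M_star \<delta> F. alpha_star \<delta> F (gamma_star \<U>) = \<U>) \<and>
     (\<forall>\<V>\<in>M_omega \<delta> F. alpha_omega \<delta> F (gamma_omega \<V>) = \<V>) \<and>
     \<comment> \<open>preservation of unions\<close>
     (\<forall>U1 U2. alpha_star \<delta> F (U1 \<union> U2) = alpha_star \<delta> F U1 \<union> alpha_star \<delta> F U2) \<and>
     (\<forall>\<U>1\<in>M_star \<delta> F. \<forall>\<U>2\<in>M_star \<delta> F. gamma_star (\<U>1 \<union> \<U>2) = gamma_star \<U>1 \<union> gamma_star \<U>2) \<and>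
     (\<forall>V1 V2. alpha_omega \<delta> F (V1 \<union> V2) = alpha_omega \<delta> F V1 \<union> alpha_omega \<delta> F V2) \<and>
     (\<forall>\<V>1\<in>M_omega \<delta> F. \<forall>\<V>2\<in>M_omega \<delta> F. gamma_omega (\<V>1 \<union> \<V>2) = gamma_omega \<V>1 \<union> gamma_omega \<V>2) \<and>
     \<comment> \<open>preservation of least elements\<close>
     (\<forall>\<U>\<in>M_star \<delta> F. alpha_star \<delta> F {} \<subseteq> \<U>) \<and>
     (\<forall>\<U>\<in>M_star \<delta> F. (\<forall>\<W>\<in>M_star \<delta> F. \<U> \<subseteq> \<W>) \<longrightarrow> gamma_star \<U> = {}) \<and>
     (\<forall>\<V>\<in>M_omega \<delta> F. alpha_omega \<delta> F {} \<subseteq> \<V>) \<and>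
     (\<forall>\<V>\<in>M_omega \<delta> F. (\<forall>\<W>\<in>M_omega \<delta> F. \<V> \<subseteq> \<W>) \<longrightarrow> gamma_omega \<V> = {}) \<and>
     \<comment> \<open>preservation of greatest elements\<close>
     (\<forall>\<U>\<in>M_star \<delta> F. \<U> \<subseteq> alpha_star \<delta> F UNIV) \<and>
     (\<forall>\<U>\<in>M_star \<delta> F. (\<forall>\<W>\<in>M_star \<delta> F. \<W> \<subseteq> \<U>) \<longrightarrow> gamma_star \<U> = UNIV) \<and>
     (\<forall>\<V>\<in>M_omega \<delta> F. \<V> \<subseteq> alpha_omega \<delta> F UNIV) \<and>
     (\<forall>\<V>\<in>M_omega \<delta> F. (\<forall>\<W>\<in>M_omega \<delta> F. \<W> \<subseteq> \<V>) \<longrightarrow> gamma_omega \<V> = UNIV) \<and>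
     \<comment> \<open>the concretizations preserve intersections\<close>
     (\<forall>\<U>1\<in>M_star \<delta> F. \<forall>\<U>2\<in>M_star \<delta> F. gamma_star (\<U>1 \<inter> \<U>2) = gamma_star \<U>1 \<inter> gamma_star \<U>2) \<and>
     (\<forall>\<V>1\<in>M_omega \<delta> F. \<forall>\<V>2\<in>M_omega \<delta> F. gamma_omega (\<V>1 \<inter> \<V>2) = gamma_omega \<V>1 \<inter> gamma_omega \<V>2)"
proof (intro conjI ballI allI impI)
  show "\<And>U. alpha_star \<delta> F U \<in> M_star \<delta> F" unfolding alpha_star_def M_star_def by blast
  show "\<And>V. alpha_omega \<delta> F V \<in> M_omega \<delta> F" unfolding alpha_omega_def M_omega_def by blast
  show "mono (alpha_star \<delta> F)" unfolding alpha_star_def by (rule monoI) blast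
  show "mono_on (M_star \<delta> F) gamma_star" unfolding gamma_star_def by (rule mono_onI) blast
  show "mono (alpha_omega \<delta> F)" unfolding alpha_omega_def
    by (rule monoI) (intro closure_mono fmap_mono)
  show "mono_on (M_omega \<delta> F) gamma_omega" unfolding gamma_omega_def by (rule mono_onI) (rule gmap_mono)
  show "\<And>U \<U>. \<U> \<in> M_star \<delta> F \<Longrightarrow> (alpha_star \<delta> F U \<subseteq> \<U>) = (U \<subseteq> gamma_star \<U>)"
    by (rule star_galois)
  show "\<And>V \<V>. \<V> \<in> M_omega \<delta> F \<Longrightarrow> (alpha_omega \<delta> F V \<subseteq> \<V>) = (V \<subseteq> gamma_omega \<V>)"
    by (rule om_galois)
  show "\<And>\<U>. \<U> \<in> M_star \<delta> F \<Longrightarrow> alpha_star \<delta> F (gamma_star \<U>) = \<U>" by (rule star_ag)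
  show "\<And>\<V>. \<V> \<in> M_omega \<delta> F \<Longrightarrow> alpha_omega \<delta> F (gamma_omega \<V>) = \<V>" by (rule om_ag)
  show "\<And>U1 U2. alpha_star \<delta> F (U1 \<union> U2) = alpha_star \<delta> F U1 \<union> alpha_star \<delta> F U2"
    unfolding alpha_star_def by blast
  show "\<And>\<U>1 \<U>2. gamma_star (\<U>1 \<union> \<U>2) = gamma_star \<U>1 \<union> gamma_star \<U>2"
    unfolding gamma_star_def by blast
  show "\<And>V1 V2. alpha_omega \<delta> F (V1 \<union> V2) = alpha_omega \<delta> F V1 \<union> alpha_omega \<delta> F V2"
    unfolding alpha_omega_def fmap_Un closure_Un ..
  show "\<And>\<V>1 \<V>2. gamma_omega (\<V>1 \<union> \<V>2) = gamma_omega \<V>1 \<union> gamma_omega \<V>2"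
    unfolding gamma_omega_def gmap_Un ..
  show "\<And>\<U>. alpha_star \<delta> F {} \<subseteq> \<U>" unfolding alpha_star_def by blast
  show "\<And>\<U>. \<U> \<in> M_star \<delta> F \<Longrightarrow> \<forall>\<W>\<in>M_star \<delta> F. \<U> \<subseteq> \<W> \<Longrightarrow> gamma_star \<U> = {}"
    unfolding M_star_def gamma_star_def by blast
  show "\<And>\<V>. alpha_omega \<delta> F {} \<subseteq> \<V>" unfolding alpha_omega_def fmap_empty closure_empty by blast
  show "\<And>\<V>. \<V> \<in> M_omega \<delta> F \<Longrightarrow> \<forall>\<W>\<in>M_omega \<delta> F. \<V> \<subseteq> \<W> \<Longrightarrow> gamma_omega \<V> = {}"
  proof -
    fix \<V> assume "\<forall>\<W>\<in>M_omega \<delta> F. \<V> \<subseteq> \<W>"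
    then have "\<V> = {}" using om_empty_in by blast
    then show "gamma_omega \<V> = {}" unfolding gamma_omega_def by (simp add: gmap_empty)
  qed
  show "\<And>\<U>. \<U> \<in> M_star \<delta> F \<Longrightarrow> \<U> \<subseteq> alpha_star \<delta> F UNIV"
    unfolding M_star_def alpha_star_def using Qcls_ne by blast
  show "\<And>\<U>. \<U> \<in> M_star \<delta> F \<Longrightarrow> \<forall>\<W>\<in>M_star \<delta> F. \<W> \<subseteq> \<U> \<Longrightarrow> gamma_star \<U> = UNIV"
    by (rule star_top)
  show "\<And>\<V>. \<V> \<in> M_omega \<delta> F \<Longrightarrow> \<V> \<subseteq> alpha_omega \<delta> F UNIV"
  proof -
    fix \<V> assume "\<V> \<in> M_omega \<delta> F"
    then obtain W where "\<V> = closure_c \<delta> F (fmap \<delta> F W)" unfolding M_omega_def by blast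
    then show "\<V> \<subseteq> alpha_omega \<delta> F UNIV" unfolding alpha_omega_def
      by (simp add: closure_mono fmap_mono)
  qed
  show "\<And>\<V>. \<V> \<in> M_omega \<delta> F \<Longrightarrow> \<forall>\<W>\<in>M_omega \<delta> F. \<W> \<subseteq> \<V> \<Longrightarrow> gamma_omega \<V> = UNIV"
    by (rule om_top)
  show "\<And>\<U>1 \<U>2. \<U>1 \<in> M_star \<delta> F \<Longrightarrow> \<U>2 \<in> M_star \<delta> F \<Longrightarrow>
      gamma_star (\<U>1 \<inter> \<U>2) = gamma_star \<U>1 \<inter> gamma_star \<U>2" by (rule star_inter)
  show "\<And>\<V>1 \<V>2. \<V>1 \<in> M_omega \<delta> F \<Longrightarrow> \<V>2 \<in> M_omega \<delta> F \<Longrightarrow>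
      gamma_omega (\<V>1 \<inter> \<V>2) = gamma_omega \<V>1 \<inter> gamma_omega \<V>2" by (rule om_inter)
qed

end
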